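(* There is $n_0$ such that for every $n>n_0$ and every $H\in\{P_4, 2K_2\}$, $$\mathrm{IR}(H, K_{1,n}) \leq n + 2n\log^{-1/4} n.$$
   Context: All graphs are finite and simple. $P_4$ is the path on $4$ vertices, $2K_2$ is the disjoint union of two edges, $K_{1,n}$ is the star with $n$ edges. For graphs $F$, $H$, $G$, write $F \overset{\text{ind}}{\longrightarrow} (H,G)$ if for every coloring of the edges of $F$ with red and blue there is either a red induced copy of $H$ (a vertex set $S\subseteq V(F)$ with $F[S]\cong H$ and all edges of $F[S]$ red) or a blue induced copy of $G$ (defined analogously with blue). The induced Ramsey number $\mathrm{IR}(H,G)$ is the smallest number of vertices of a graph $F$ with $F \overset{\text{ind}}{\longrightarrow} (H,G)$. *)

theory Defs
  imports Complex_Main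
begin

type_synonym 'a graph = "'a set \<times> 'a set set"

definition verts :: "'a graph \<Rightarrow> 'a set" where "verts G = fst G"
definition edges :: "'a graph \<Rightarrow> 'a set set" where "edges G = snd G"

definition simple_graph :: "'a graph \<Rightarrow> bool" where
  "simple_graph G \<longleftrightarrow> finite (verts G) \<and>
     (\<forall>e\<in>edges G. \<exists>u v. e = {u, v} \<and> u \<noteq> v \<and> u \<in> verts G \<and> v \<in> verts G)"

definition P4 :: "nat graph" where
  "P4 = ({0,1,2,3}, {{0,1},{1,2},{2,3}})"

definition twoK2 :: "nat graph" where
  "twoK2 = ({0,1,2,3}, {{0,1},{2,3}})"

definition star :: "nat \<Rightarrow> nat graph" where
  "star n = ({0..n}, {{0,i} | i. 1 \<le> i \<and> i \<le> n})"

definition induced_copy :: "'a graph \<Rightarrow> 'a set \<Rightarrow> 'b graph \<Rightarrow> bool" where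
  "induced_copy F S H \<longleftrightarrow> S \<subseteq> verts F \<and>
     (\<exists>f. bij_betw f S (verts H) \<and>
          (\<forall>u\<in>S. \<forall>v\<in>S. {u, v} \<in> edges F \<longleftrightarrow> {f u, f v} \<in> edges H))"

text \<open>A red/blue edge colouring is a map from edges to bool (True = red, False = blue).
  An induced copy of H in colour col: all edges of F[S] have colour col.\<close>
definition mono_induced_copy :: "'a graph \<Rightarrow> ('a set \<Rightarrow> bool) \<Rightarrow> bool \<Rightarrow> 'b graph \<Rightarrow> bool" where
  "mono_induced_copy F c col H \<longleftrightarrow>
     (\<exists>S. induced_copy F S H \<and> (\<forall>e\<in>edges F. e \<subseteq> S \<longrightarrow> c e = col))"

definition ind_arrows :: "'a graph \<Rightarrow> 'b graph \<Rightarrow> 'c graph \<Rightarrow> bool" where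
  "ind_arrows F H G \<longleftrightarrow>
     (\<forall>c :: 'a set \<Rightarrow> bool. mono_induced_copy F c True H \<or> mono_induced_copy F c False G)"

text \<open>Host graphs are taken on vertex type nat, which is
  no restriction since every finite graph is isomorphic to one on nat.\<close>
definition IR :: "'b graph \<Rightarrow> 'c graph \<Rightarrow> nat" where
  "IR H G = (LEAST N. \<exists>F :: nat graph. simple_graph F \<and> card (verts F) = N \<and> ind_arrows F H G)"

end

theory Submission
  imports Defs "HOL-Library.FuncSet" "HOL-Real_Asymp.Real_Asymp"
begin

lemma P4_copy:
  assumes V: "xa \<in> verts F" "xb \<in> verts F" "xc \<in> verts F" "xd \<in> verts F"
    and d: "distinct [xa,xb,xc,xd]"
    and e: "{xa,xb} \<in> edges F" "{xb,xc} \<in> edges F" "{xc,xd} \<in> edges F"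
    and ne: "{xa,xc} \<notin> edges F" "{xa,xd} \<notin> edges F" "{xb,xd} \<notin> edges F"
    and nl: "\<forall>x. {x} \<notin> edges F"
    and ed: "\<forall>e\<in>edges F. \<exists>u v. e = {u,v}"
    and c: "col {xa,xb}" "col {xb,xc}" "col {xc,xd}"
  shows "mono_induced_copy F col True P4"
proof -
  let ?S = "{xa,xb,xc,xd}"
  define f where "f = (\<lambda>x. if x = xa then 0 else if x = xb then 1 else if x = xc then 2 else (3::nat))"
  have fv: "f xa = 0" "f xb = 1" "f xc = 2" "f xd = 3" using d by (auto simp: f_def)
  have e': "{xb,xa} \<in> edges F" "{xc,xb} \<in> edges F" "{xd,xc} \<in> edges F"
    using e by (simp_all add: insert_commute)
  have ne': "{xc,xa} \<notin> edges F" "{xd,xa} \<notin> edges F" "{xd,xb} \<notin> edges F"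
    using ne by (simp_all add: insert_commute)
  have nl': "{xa,xa} \<notin> edges F" "{xb,xb} \<notin> edges F" "{xc,xc} \<notin> edges F" "{xd,xd} \<notin> edges F"
    using nl by auto
  have c': "col {xb,xa}" "col {xc,xb}" "col {xd,xc}" using c by (simp_all add: insert_commute)
  have bij: "bij_betw f ?S (verts P4)"
    using d unfolding bij_betw_def inj_on_def f_def P4_def verts_def by auto
  have ee: "\<forall>u\<in>?S. \<forall>v\<in>?S. {u, v} \<in> edges F \<longleftrightarrow> {f u, f v} \<in> edges P4"
  proof (intro ballI)
    fix u v assume "u \<in> ?S" "v \<in> ?S"
    then show "{u, v} \<in> edges F \<longleftrightarrow> {f u, f v} \<in> edges P4"
      by (elim insertE emptyE; simp only: fv e e' ne ne' nl'; simp add: P4_def edges_def doubleton_eq_iff)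
  qed
  have ic: "induced_copy F ?S P4"
    unfolding induced_copy_def using V bij ee by blast
  have "\<forall>e\<in>edges F. e \<subseteq> ?S \<longrightarrow> col e = True"
  proof (intro ballI impI)
    fix e assume ee: "e \<in> edges F" "e \<subseteq> ?S"
    obtain u v where uv0: "e = {u,v}" using ed ee(1) by blast
    have uv: "e = {u,v}" "u \<in> ?S" "v \<in> ?S" using uv0 ee(2) by auto
    have E: "{u,v} \<in> edges F" using ee uv by simp
    have "u = xa \<or> u = xb \<or> u = xc \<or> u = xd" "v = xa \<or> v = xb \<or> v = xc \<or> v = xd" using uv by auto
    then have "col {u,v}" using E
      by (elim disjE) (simp_all add: e e' ne ne' nl' nl c c')
    then show "col e = True" using uv by simp
  qed
  then show ?thesis unfolding mono_induced_copy_def using ic by blast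
qed

lemma K2_copy:
  assumes V: "xa \<in> verts F" "xb \<in> verts F" "xc \<in> verts F" "xd \<in> verts F"
    and d: "distinct [xa,xb,xc,xd]"
    and e: "{xa,xb} \<in> edges F" "{xc,xd} \<in> edges F"
    and ne: "{xa,xc} \<notin> edges F" "{xa,xd} \<notin> edges F" "{xb,xc} \<notin> edges F" "{xb,xd} \<notin> edges F"
    and nl: "\<forall>x. {x} \<notin> edges F"
    and ed: "\<forall>e\<in>edges F. \<exists>u v. e = {u,v}"
    and c: "col {xa,xb}" "col {xc,xd}"
  shows "mono_induced_copy F col True twoK2"
proof -
  let ?S = "{xa,xb,xc,xd}"
  define f where "f = (\<lambda>x. if x = xa then 0 else if x = xb then 1 else if x = xc then 2 else (3::nat))"
  have fv: "f xa = 0" "f xb = 1" "f xc = 2" "f xd = 3" using d by (auto simp: f_def)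
  have e': "{xb,xa} \<in> edges F" "{xd,xc} \<in> edges F"
    using e by (simp_all add: insert_commute)
  have ne': "{xc,xa} \<notin> edges F" "{xd,xa} \<notin> edges F" "{xc,xb} \<notin> edges F" "{xd,xb} \<notin> edges F"
    using ne by (simp_all add: insert_commute)
  have nl': "{xa,xa} \<notin> edges F" "{xb,xb} \<notin> edges F" "{xc,xc} \<notin> edges F" "{xd,xd} \<notin> edges F"
    using nl by auto
  have c': "col {xb,xa}" "col {xd,xc}" using c by (simp_all add: insert_commute)
  have bij: "bij_betw f ?S (verts twoK2)"
    using d unfolding bij_betw_def inj_on_def f_def twoK2_def verts_def by auto
  have ee: "\<forall>u\<in>?S. \<forall>v\<in>?S. {u, v} \<in> edges F \<longleftrightarrow> {f u, f v} \<in> edges twoK2"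
  proof (intro ballI)
    fix u v assume "u \<in> ?S" "v \<in> ?S"
    then show "{u, v} \<in> edges F \<longleftrightarrow> {f u, f v} \<in> edges twoK2"
      by (elim insertE emptyE; simp only: fv e e' ne ne' nl'; simp add: twoK2_def edges_def doubleton_eq_iff)
  qed
  have ic: "induced_copy F ?S twoK2"
    unfolding induced_copy_def using V bij ee by blast
  have "\<forall>e\<in>edges F. e \<subseteq> ?S \<longrightarrow> col e = True"
  proof (intro ballI impI)
    fix e assume ee: "e \<in> edges F" "e \<subseteq> ?S"
    obtain u v where uv0: "e = {u,v}" using ed ee(1) by blast
    have uv: "e = {u,v}" "u \<in> ?S" "v \<in> ?S" using uv0 ee(2) by auto
    have E: "{u,v} \<in> edges F" using ee uv by simp
    have "u = xa \<or> u = xb \<or> u = xc \<or> u = xd" "v = xa \<or> v = xb \<or> v = xc \<or> v = xd" using uv by auto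
    then have "col {u,v}" using E
      by (elim disjE) (simp_all add: e e' ne ne' nl' nl c c')
    then show "col e = True" using uv by simp
  qed
  then show ?thesis unfolding mono_induced_copy_def using ic by blast
qed

lemma star_copy:
  assumes V: "a \<in> verts F" "X \<subseteq> verts F" and aX: "a \<notin> X" and fin: "finite X" and cX: "card X = n"
    and e: "\<forall>x\<in>X. {a,x} \<in> edges F"
    and ne: "\<forall>x\<in>X. \<forall>y\<in>X. {x,y} \<notin> edges F"
    and nl: "{a} \<notin> edges F"
    and ed: "\<forall>e\<in>edges F. \<exists>u v. e = {u,v}"
    and c: "\<forall>x\<in>X. \<not> col {a,x}"
  shows "mono_induced_copy F col False (star n)"
proof -
  obtain h where h: "bij_betw h X {0..<n}" using ex_bij_betw_finite_nat[OF fin] cX by auto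
  let ?S = "insert a X"
  define f where "f = (\<lambda>x. if x = a then 0 else Suc (h x))"
  have bij: "bij_betw f ?S {0..n}"
  proof -
    have "bij_betw f X {1..n}"
    proof -
      have "bij_betw Suc {0..<n} {1..n}" by (auto simp: bij_betw_Suc atLeastLessThanSuc_atLeastAtMost)
      then have "bij_betw (Suc \<circ> h) X {1..n}" using h by (rule bij_betw_trans[rotated])
      moreover have "\<forall>x\<in>X. f x = (Suc \<circ> h) x" using aX unfolding f_def by auto
      ultimately show ?thesis using bij_betw_cong[of X f "Suc \<circ> h" "{1..n}"] by simp
    qed
    moreover have "{0..n} = insert (f a) {1..n}" by (auto simp: f_def)
    moreover have "f a \<notin> {1..n}" by (simp add: f_def)
    ultimately show ?thesis using aX notIn_Un_bij_betw[of a X f "{1..n}"] by simp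
  qed
  have fX: "x \<in> X \<Longrightarrow> f x \<ge> 1 \<and> f x \<le> n" for x
    using bij_betwE[OF h] aX by (force simp: f_def)
  have ee: "\<forall>u\<in>?S. \<forall>v\<in>?S. {u, v} \<in> edges F \<longleftrightarrow> {f u, f v} \<in> edges (star n)"
  proof (intro ballI)
    fix u v assume u: "u \<in> ?S" and v: "v \<in> ?S"
    show "{u, v} \<in> edges F \<longleftrightarrow> {f u, f v} \<in> edges (star n)"
    proof (cases "u = a")
      case True
      then show ?thesis
      proof (cases "v = a")
        case True with \<open>u = a\<close> nl show ?thesis by (auto simp: star_def edges_def f_def doubleton_eq_iff)
      next
        case False
        then have "v \<in> X" using v by auto
        then show ?thesis using e fX[of v] True by (auto simp: star_def edges_def f_def)
      qed
    next
      case False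
      then have uX: "u \<in> X" using u by auto
      show ?thesis
      proof (cases "v = a")
        case True
        then show ?thesis using e fX[of u] uX by (auto simp: star_def edges_def f_def insert_commute)
      next
        case False
        then have "v \<in> X" using v by auto
        then show ?thesis using ne uX fX[of u] fX[of v] by (auto simp: star_def edges_def doubleton_eq_iff)
      qed
    qed
  qed
  have vs: "verts (star n) = {0..n}" by (simp add: star_def verts_def)
  have Ssub: "?S \<subseteq> verts F" using V by simp
  have ic: "induced_copy F ?S (star n)"
    unfolding induced_copy_def vs using Ssub bij ee by blast
  have "\<forall>e\<in>edges F. e \<subseteq> ?S \<longrightarrow> col e = False"
  proof (intro ballI impI)
    fix e assume ee: "e \<in> edges F" "e \<subseteq> ?S"
    obtain u v where uv0: "e = {u,v}" using ed ee(1) by blast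
    have uv: "e = {u,v}" "u \<in> ?S" "v \<in> ?S" using uv0 ee(2) by auto
    show "col e = False"
    proof (cases "u = a")
      case True
      then show ?thesis using uv ee nl c by auto
    next
      case False
      then have "u \<in> X" using uv by auto
      then show ?thesis using uv ee ne c by (auto simp: insert_commute)
    qed
  qed
  then show ?thesis unfolding mono_induced_copy_def using ic by blast
qed

lemma transfer_mono:
  fixes F :: "'a graph" and g :: "'a \<Rightarrow> 'd" and K :: "'e graph"
  assumes inj: "inj_on g (verts F)" and sub: "\<forall>e\<in>edges F. e \<subseteq> verts F"
    and m: "mono_induced_copy F (col \<circ> image g) b K"
  shows "mono_induced_copy (g ` verts F, (\<lambda>e. g ` e) ` edges F) col b K"
  proof -
  let ?F2 = "(g ` verts F, (\<lambda>e. g ` e) ` edges F)"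
  obtain S f where S: "S \<subseteq> verts F" and bf: "bij_betw f S (verts K)"
    and ef: "\<forall>u\<in>S. \<forall>v\<in>S. {u, v} \<in> edges F \<longleftrightarrow> {f u, f v} \<in> edges K"
    and cS: "\<forall>e\<in>edges F. e \<subseteq> S \<longrightarrow> (col \<circ> image g) e = b"
    using m unfolding mono_induced_copy_def induced_copy_def by blast
  have injS: "inj_on g S" using inj S inj_on_subset by blast
  define f2 where "f2 = f \<circ> the_inv_into S g"
  have b2: "bij_betw f2 (g ` S) (verts K)" unfolding f2_def
    using bij_betw_trans[OF bij_betw_the_inv_into[OF inj_on_imp_bij_betw[OF injS]] bf] by simp
  have fg: "f2 (g u) = f u" if "u \<in> S" for u
    unfolding f2_def using the_inv_into_f_f[OF injS that] by simp
  have eq: "{g u, g v} \<in> (\<lambda>e. g ` e) ` edges F \<longleftrightarrow> {u, v} \<in> edges F"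
    if "u \<in> verts F" "v \<in> verts F" for u v
  proof
    assume "{g u, g v} \<in> (\<lambda>e. g ` e) ` edges F"
    then obtain e where e: "e \<in> edges F" "{g u, g v} = g ` e" by blast
    have "g ` {u,v} = g ` e" using e by simp
    moreover have "{u,v} \<subseteq> verts F" "e \<subseteq> verts F" using sub e that by auto
    ultimately have "{u,v} = e" using inj_on_image_eq_iff[OF inj] by blast
    then show "{u, v} \<in> edges F" using e by simp
  next
    assume "{u, v} \<in> edges F"
    moreover have "{g u, g v} = g ` {u, v}" by simp
    ultimately show "{g u, g v} \<in> (\<lambda>e. g ` e) ` edges F" by (rule rev_image_eqI)
  qed
  have ic: "induced_copy ?F2 (g ` S) K"
    unfolding induced_copy_def
  proof (intro conjI exI[of _ f2])
    show "g ` S \<subseteq> verts ?F2" using S by (auto simp: verts_def)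
    show "bij_betw f2 (g ` S) (verts K)" by (rule b2)
    show "\<forall>u\<in>g ` S. \<forall>v\<in>g ` S. ({u, v} \<in> edges ?F2) = ({f2 u, f2 v} \<in> edges K)"
    proof (intro ballI)
      fix u' v' assume "u' \<in> g ` S" "v' \<in> g ` S"
      then obtain u v where uv: "u \<in> S" "v \<in> S" "u' = g u" "v' = g v" by blast
      have "u \<in> verts F" "v \<in> verts F" using uv S by auto
      then have "({u', v'} \<in> edges ?F2) = ({u, v} \<in> edges F)" using eq uv by (simp add: edges_def)
      also have "\<dots> = ({f u, f v} \<in> edges K)" using ef uv by simp
      also have "\<dots> = ({f2 u', f2 v'} \<in> edges K)" using fg uv by simp
      finally show "({u', v'} \<in> edges ?F2) = ({f2 u', f2 v'} \<in> edges K)" .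
    qed
  qed
  have "\<forall>e\<in>edges ?F2. e \<subseteq> g ` S \<longrightarrow> col e = b"
  proof (intro ballI impI)
    fix e2 assume e2: "e2 \<in> edges ?F2" "e2 \<subseteq> g ` S"
    then obtain e where e: "e \<in> edges F" "e2 = g ` e" by (auto simp: edges_def)
    have "e \<subseteq> S"
    proof
      fix x assume "x \<in> e"
      then have "g x \<in> g ` S" using e e2 by auto
      then obtain y where "y \<in> S" "g x = g y" by auto
      moreover have "x \<in> verts F" using \<open>x \<in> e\<close> sub e by auto
      moreover have "y \<in> verts F" using \<open>y \<in> S\<close> S by auto
      ultimately have "x = y" using inj_onD[OF inj] by metis
      then show "x \<in> S" using \<open>y \<in> S\<close> by simp
    qed
    then show "col e2 = b" using cS e by auto
  qed
  then show ?thesis unfolding mono_induced_copy_def using ic by blast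
qed

lemma transfer_arrows:
  fixes F :: "'a graph" and g :: "'a \<Rightarrow> 'd"
  assumes inj: "inj_on g (verts F)" and sub: "\<forall>e\<in>edges F. e \<subseteq> verts F"
    and arr: "ind_arrows F H G"
  shows "ind_arrows (g ` verts F, (\<lambda>e. g ` e) ` edges F) H G"
  unfolding ind_arrows_def
proof
  fix col :: "'d set \<Rightarrow> bool"
  have "mono_induced_copy F (col \<circ> image g) True H \<or> mono_induced_copy F (col \<circ> image g) False G"
    using arr unfolding ind_arrows_def by (rule allE)
  then show "mono_induced_copy (g ` verts F, (\<lambda>e. g ` e) ` edges F) col True H \<or> mono_induced_copy (g ` verts F, (\<lambda>e. g ` e) ` edges F) col False G"
    using transfer_mono[OF inj sub, of col True H] transfer_mono[OF inj sub, of col False G] by (elim disjE) simp_all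
qed

lemma IR_le:
  fixes F :: "'a graph"
  assumes sg: "simple_graph F" and arr: "ind_arrows F H G"
  shows "(\<exists>F2 :: nat graph. simple_graph F2 \<and> ind_arrows F2 H G) \<and> IR H G \<le> card (verts F)"
proof -
  have fin: "finite (verts F)" using sg by (simp add: simple_graph_def)
  obtain g :: "'a \<Rightarrow> nat" where g: "bij_betw g (verts F) {0..<card (verts F)}"
    using ex_bij_betw_finite_nat[OF fin] by blast
  have inj: "inj_on g (verts F)" using g bij_betw_def by blast
  have sgE: "\<forall>e\<in>edges F. \<exists>u v. e = {u, v} \<and> u \<noteq> v \<and> u \<in> verts F \<and> v \<in> verts F"
    using sg unfolding simple_graph_def by (rule conjunct2)
  have sub: "\<forall>e\<in>edges F. e \<subseteq> verts F"
  proof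
    fix e assume "e \<in> edges F"
    then obtain u v where "e = {u, v}" "u \<in> verts F" "v \<in> verts F" using sgE by blast
    then show "e \<subseteq> verts F" by simp
  qed
  let ?F2 = "(g ` verts F, (\<lambda>e. g ` e) ` edges F)"
  have a2: "ind_arrows ?F2 H G" by (rule transfer_arrows[OF inj sub arr])
  have s2: "simple_graph ?F2"
    unfolding simple_graph_def
  proof (intro conjI ballI)
    show "finite (verts ?F2)" using fin by (simp add: verts_def)
    fix e2 assume "e2 \<in> edges ?F2"
    then obtain e where e: "e \<in> edges F" "e2 = g ` e" by (auto simp: edges_def)
    from sgE obtain u v where uv: "e = {u,v}" "u \<noteq> v" "u \<in> verts F" "v \<in> verts F"
      using e(1) by blast
    have "g u \<noteq> g v" using inj_onD[OF inj _ uv(3,4)] uv(2) by blast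
    then show "\<exists>u v. e2 = {u, v} \<and> u \<noteq> v \<and> u \<in> verts ?F2 \<and> v \<in> verts ?F2"
      using e uv by (auto simp: verts_def)
  qed
  have c2: "card (verts ?F2) = card (verts F)" using card_image[OF inj] by (simp add: verts_def)
  have "IR H G \<le> card (verts ?F2)"
    unfolding IR_def by (rule Least_le) (use s2 a2 in blast)
  then show ?thesis using s2 a2 c2 by auto
qed

lemma prod_half:
  fixes w :: "'i \<Rightarrow> real" and q :: real
  assumes "finite I" "\<forall>i\<in>I. 0 \<le> w i" "q > 0" "sum w I \<le> card I * q / 2"
  shows "prod w I \<le> (q/2) ^ card I"
proof -
  have b: "w i \<le> (q/2) * exp (2 * w i / q - 1)" for i
  proof -
    have "1 + (2 * w i / q - 1) \<le> exp (2 * w i / q - 1)" by (rule exp_ge_add_one_self)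
    then have "2 * w i / q \<le> exp (2 * w i / q - 1)" by simp
    then have "(q/2) * (2 * w i / q) \<le> (q/2) * exp (2 * w i / q - 1)"
      using assms(3) by (intro mult_left_mono) auto
    then show ?thesis using assms(3) by simp
  qed
  have p1: "prod w I \<le> prod (\<lambda>i. (q/2) * exp (2 * w i / q - 1)) I"
    using assms(2) b by (intro prod_mono) auto
  have p2: "prod (\<lambda>i. (q/2) * exp (2 * w i / q - 1)) I = (q/2) ^ card I * exp (sum (\<lambda>i. 2 * w i / q - 1) I)"
    unfolding prod.distrib by (simp add: exp_sum assms(1))
  have p3: "sum (\<lambda>i. 2 * w i / q - 1) I = 2 * sum w I / q - card I"
    by (simp add: sum_subtractf sum_divide_distrib[symmetric] sum_distrib_left)
  have p4: "2 * sum w I / q - card I \<le> 0" using assms(3,4) by (simp add: field_simps)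
  have "exp (sum (\<lambda>i. 2 * w i / q - 1) I) \<le> 1" using p3 p4 by simp
  then have "(q/2) ^ card I * exp (sum (\<lambda>i. 2 * w i / q - 1) I) \<le> (q/2) ^ card I * 1"
    using assms(3) by (intro mult_left_mono) auto
  with p1 p2 show ?thesis by simp
qed

lemma prod_exp:
  fixes t :: "'i \<Rightarrow> real"
  assumes "finite I" "\<forall>i\<in>I. 0 \<le> t i \<and> t i \<le> q" "q > 0"
  shows "prod (\<lambda>i. q - t i) I \<le> q ^ card I * exp (- sum t I / q)"
proof -
  have b: "q - t i \<le> q * exp (- t i / q)" for i
  proof -
    have "1 + (- t i / q) \<le> exp (- t i / q)" by (rule exp_ge_add_one_self)
    then have "q * (1 + (- t i / q)) \<le> q * exp (- t i / q)"
      using assms(3) by (intro mult_left_mono) auto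
    moreover have "q * (1 + (- t i / q)) = q - t i" using assms(3) by (simp add: field_simps)
    ultimately show ?thesis by linarith
  qed
  have "prod (\<lambda>i. q - t i) I \<le> prod (\<lambda>i. q * exp (- t i / q)) I"
    using assms(2) b by (intro prod_mono) auto
  also have "\<dots> = q ^ card I * exp (sum (\<lambda>i. - t i / q) I)"
    unfolding prod.distrib by (simp add: exp_sum assms(1))
  also have "sum (\<lambda>i. - t i / q) I = - sum t I / q"
    by (simp add: sum_negf sum_divide_distrib[symmetric])
  finally show ?thesis .
qed

type_synonym vt = "(nat \<times> nat) + (nat \<times> (nat \<Rightarrow> nat))"

definition GA :: "nat \<Rightarrow> nat \<Rightarrow> (nat \<times> nat) set" where "GA l q = {..<l} \<times> {..<q}"
definition GB :: "nat \<Rightarrow> nat \<Rightarrow> nat \<Rightarrow> (nat \<times> (nat \<Rightarrow> nat)) set" where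
  "GB l q c = {..<c} \<times> PiE {..<l} (\<lambda>_. {..<q})"
definition Gr :: "nat \<Rightarrow> nat \<Rightarrow> nat \<Rightarrow> ((nat \<times> nat) + (nat \<times> (nat \<Rightarrow> nat))) graph" where
  "Gr l q c = (Inl ` GA l q \<union> Inr ` GB l q c,
     {{Inl a, Inr b} | a b. a \<in> GA l q \<and> b \<in> GB l q c \<and> snd b (fst a) \<noteq> snd a})"

lemma Gr_verts: "verts (Gr l q c) = Inl ` GA l q \<union> Inr ` GB l q c"
  by (simp add: Gr_def verts_def)

lemma Gr_edges: "edges (Gr l q c) = {{Inl a, Inr b} | a b. a \<in> GA l q \<and> b \<in> GB l q c \<and> snd b (fst a) \<noteq> snd a}"
  by (simp add: Gr_def edges_def)

lemma Gr_AA: "{Inl a, Inl a'} \<notin> edges (Gr l q c)"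
  by (auto simp: Gr_edges doubleton_eq_iff)
lemma Gr_BB: "{Inr b, Inr b'} \<notin> edges (Gr l q c)"
  by (auto simp: Gr_edges doubleton_eq_iff)
lemma Gr_AB: "{Inl a, Inr b} \<in> edges (Gr l q c) \<longleftrightarrow> a \<in> GA l q \<and> b \<in> GB l q c \<and> snd b (fst a) \<noteq> snd a"
  (is "?L \<longleftrightarrow> ?R")
proof
  assume ?L then show ?R by (auto simp: Gr_edges doubleton_eq_iff)
next
  assume ?R then show ?L unfolding Gr_edges by (blast intro: insert_commute)
qed
lemma Gr_BA: "{Inr b, Inl a} \<in> edges (Gr l q c) \<longleftrightarrow> a \<in> GA l q \<and> b \<in> GB l q c \<and> snd b (fst a) \<noteq> snd a"
  (is "?L \<longleftrightarrow> ?R")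
proof
  assume ?L then show ?R by (auto simp: Gr_edges doubleton_eq_iff)
next
  assume ?R then show ?L unfolding Gr_edges by (blast intro: insert_commute)
qed
lemma Gr_loop: "\<forall>x. {x} \<notin> edges (Gr l q c)"
  by (auto simp: Gr_edges doubleton_eq_iff)
lemma Gr_ed: "\<forall>e\<in>edges (Gr l q c). \<exists>u v. e = {u,v}"
  by (auto simp: Gr_edges)

lemma finite_GA: "finite (GA l q)" by (simp add: GA_def)
lemma finite_GB: "finite (GB l q c)" by (simp add: GB_def finite_PiE)
lemma card_GA: "card (GA l q) = l * q" by (simp add: GA_def)
lemma card_GB: "card (GB l q c) = c * q ^ l"
  by (simp add: GB_def card_cartesian_product card_PiE)

lemma Gr_simple: "simple_graph (Gr l q c)"
  unfolding simple_graph_def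
proof (intro conjI ballI)
  show "finite (verts (Gr l q c))" by (simp add: Gr_verts finite_GA finite_GB)
  fix e assume "e \<in> edges (Gr l q c)"
  then obtain a b where ab: "e = {Inl a, Inr b}" "a \<in> GA l q" "b \<in> GB l q c"
    unfolding Gr_edges by blast
  show "\<exists>u v. e = {u, v} \<and> u \<noteq> v \<and> u \<in> verts (Gr l q c) \<and> v \<in> verts (Gr l q c)"
    by (rule exI[of _ "Inl a"], rule exI[of _ "Inr b"]) (simp add: ab Gr_verts)
qed

lemma Gr_card: "card (verts (Gr l q c)) = l * q + c * q ^ l"
proof -
  have "card (Inl ` GA l q \<union> Inr ` GB l q c :: vt set) = card (Inl ` GA l q :: vt set) + card (Inr ` GB l q c :: vt set)"
    by (subst card_Un_disjoint) (auto simp: finite_GA finite_GB)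
  also have "\<dots> = l * q + c * q ^ l"
    by (simp add: card_image card_GA card_GB)
  finally show ?thesis by (simp add: Gr_verts)
qed

lemma card_Nb:
  assumes a: "a \<in> GA l q"
  shows "card {b \<in> GB l q c. snd b (fst a) \<noteq> snd a} = c * ((q - 1) * q ^ (l - 1))"
proof -
  obtain i j where ij: "a = (i,j)" "i < l" "j < q" using a by (auto simp: GA_def)
  define B where "B = (\<lambda>i'. if i' = i then {..<q} - {j} else {..<q})"
  have fe: "f \<in> PiE {..<l} B \<longleftrightarrow> f \<in> PiE {..<l} (\<lambda>_. {..<q}) \<and> f i \<noteq> j" for f
  proof
    assume f: "f \<in> PiE {..<l} B"
    have "f i \<in> B i" using PiE_mem[OF f] ij by simp
    then have "f i \<noteq> j" by (simp add: B_def)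
    moreover have "f \<in> PiE {..<l} (\<lambda>_. {..<q})"
    proof (rule PiE_I)
      fix x assume "x \<in> {..<l}" then have "f x \<in> B x" using PiE_mem[OF f] by simp
      then show "f x \<in> {..<q}" by (simp add: B_def split: if_splits)
    next
      fix x assume "x \<notin> {..<l}" then show "f x = undefined" using PiE_arb[OF f] by simp
    qed
    ultimately show "f \<in> PiE {..<l} (\<lambda>_. {..<q}) \<and> f i \<noteq> j" by simp
  next
    assume f: "f \<in> PiE {..<l} (\<lambda>_. {..<q}) \<and> f i \<noteq> j"
    show "f \<in> PiE {..<l} B"
    proof (rule PiE_I)
      fix x assume "x \<in> {..<l}" then have "f x \<in> {..<q}" using PiE_mem[of f] f by blast
      then show "f x \<in> B x" using f by (cases "x = i") (simp_all add: B_def)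
    next
      fix x assume "x \<notin> {..<l}" then show "f x = undefined" using PiE_arb[of f] f by blast
    qed
  qed
  have eq: "{b \<in> GB l q c. snd b (fst a) \<noteq> snd a} = {..<c} \<times> PiE {..<l} B"
  proof (rule set_eqI)
    fix b :: "nat \<times> (nat \<Rightarrow> nat)"
    obtain s f where b: "b = (s, f)" by fastforce
    show "b \<in> {b \<in> GB l q c. snd b (fst a) \<noteq> snd a} \<longleftrightarrow> b \<in> {..<c} \<times> PiE {..<l} B"
      using fe[of f] ij unfolding b GB_def by auto
  qed
  have "card (PiE {..<l} B) = prod (\<lambda>i'. card (B i')) {..<l}"
    by (simp add: card_PiE)
  also have "\<dots> = card (B i) * prod (\<lambda>i'. card (B i')) ({..<l} - {i})"
    using ij by (simp add: prod.remove)
  also have "prod (\<lambda>i'. card (B i')) ({..<l} - {i}) = prod (\<lambda>_. q) ({..<l} - {i})"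
    by (rule prod.cong) (auto simp: B_def)
  also have "\<dots> = q ^ (l - 1)" using ij by simp
  also have "card (B i) = q - 1" using ij by (simp add: B_def)
  finally show ?thesis using eq by (simp add: card_cartesian_product)
qed

lemma red_lb:
  assumes noblue: "\<not> mono_induced_copy (Gr l q c) col False (star n)"
    and a: "a \<in> GA l q" and q: "q \<ge> 2" and hc: "n - 1 \<le> c * ((q - 2) * q^(l-1))"
  shows "c * q^(l-1) \<le> card {b \<in> GB l q c. snd b (fst a) \<noteq> snd a \<and> col {Inl a, Inr b}}"
proof -
  define R where "R = {b \<in> GB l q c. snd b (fst a) \<noteq> snd a \<and> col {Inl a, Inr b}}"
  define Bl where "Bl = {b \<in> GB l q c. snd b (fst a) \<noteq> snd a \<and> \<not> col {Inl a, Inr b}}"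
  have finB: "finite Bl" "finite R" using finite_GB by (auto simp: Bl_def R_def)
  have "card Bl < n"
  proof (rule ccontr)
    assume "\<not> card Bl < n"
    then have "n \<le> card Bl" by simp
    then obtain X where X: "X \<subseteq> Bl" "card X = n" and fX: "finite X"
      by (rule obtain_subset_with_card_n)
    have "mono_induced_copy (Gr l q c) col False (star n)"
    proof (rule star_copy[where a = "Inl a" and X = "Inr ` X"])
      show "Inl a \<in> verts (Gr l q c)" using a by (simp add: Gr_verts)
      show "Inr ` X \<subseteq> verts (Gr l q c)" using X by (auto simp: Gr_verts Bl_def)
      show "Inl a \<notin> Inr ` X" by auto
      show "finite (Inr ` X)" using fX by simp
      show "card (Inr ` X) = n" using X by (simp add: card_image)
      show "\<forall>x\<in>Inr ` X. {Inl a, x} \<in> edges (Gr l q c)" using X a by (auto simp: Gr_AB Bl_def)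
      show "\<forall>x\<in>Inr ` X. \<forall>y\<in>Inr ` X. {x, y} \<notin> edges (Gr l q c)" by (auto simp: Gr_BB)
      show "{Inl a} \<notin> edges (Gr l q c)" using Gr_loop by blast
      show "\<forall>e\<in>edges (Gr l q c). \<exists>u v. e = {u, v}" by (rule Gr_ed)
      show "\<forall>x\<in>Inr ` X. \<not> col {Inl a, x}" using X by (auto simp: Bl_def)
    qed
    then show False using noblue by blast
  qed
  have U: "{b \<in> GB l q c. snd b (fst a) \<noteq> snd a} = R \<union> Bl" by (auto simp: R_def Bl_def)
  have I: "R \<inter> Bl = {}" by (auto simp: R_def Bl_def)
  have "card R + card Bl = card (R \<union> Bl)" using card_Un_disjoint[OF finB(2) finB(1) I] by simp
  also have "\<dots> = c * ((q - 1) * q ^ (l - 1))" using card_Nb[OF a, of c] U by simp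
  finally have "card R + card Bl = c * ((q - 1) * q ^ (l - 1))" .
  moreover obtain q' where "q = q' + 2" using q le_Suc_ex by (metis add.commute)
  ultimately show ?thesis using hc \<open>card Bl < n\<close>
    unfolding R_def[symmetric] by (simp add: algebra_simps)
qed

lemma arrows_2K2:
  assumes q: "q \<ge> 3" and l: "l = q^2" and c: "c \<ge> 1" and hc: "n - 1 \<le> c*((q-2)*q^(l-1))"
  shows "ind_arrows (Gr l q c) twoK2 (star n)"
  unfolding ind_arrows_def
proof (intro allI disjCI)
  fix col :: "((nat \<times> nat) + (nat \<times> (nat \<Rightarrow> nat))) set \<Rightarrow> bool"
  assume noblue: "\<not> mono_induced_copy (Gr l q c) col False (star n)"
  show "mono_induced_copy (Gr l q c) col True twoK2"
  proof (rule ccontr)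
    assume nored: "\<not> mono_induced_copy (Gr l q c) col True twoK2"
    define R where "R a = {b \<in> GB l q c. snd b (fst a) \<noteq> snd a \<and> col {Inl a, Inr b}}" for a
    have Rlb: "c*q^(l-1) \<le> card (R a)" if "a \<in> GA l q" for a
      unfolding R_def using red_lb[OF noblue that _ hc] q by simp
    define Out where "Out a = {a' \<in> GA l q. a' \<noteq> a \<and> (\<exists>b\<in>R a. snd b (fst a') = snd a')}" for a
    have no2: "a \<notin> Out a'" if a: "a \<in> GA l q" and a': "a' \<in> Out a" for a a'
    proof
      assume "a \<in> Out a'"
      then obtain b' where b': "b' \<in> R a'" "snd b' (fst a) = snd a" by (auto simp: Out_def)
      obtain b where b: "b \<in> R a" "snd b (fst a') = snd a'" "a' \<in> GA l q" "a' \<noteq> a"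
        using a' by (auto simp: Out_def)
      have "mono_induced_copy (Gr l q c) col True twoK2"
        apply (rule K2_copy[where xa="Inl a" and xb="Inr b" and xc="Inl a'" and xd = "Inr b'"])
        using a b b' Gr_loop Gr_ed
        by (auto simp: Gr_verts Gr_AB Gr_BA Gr_AA Gr_BB R_def)
      with nored show False by blast
    qed
    define m where "m = l * q"
    have mpos: "m > 0" using q l by (simp add: m_def)
    define P where "P = Sigma (GA l q) Out"
    have finO: "finite (Out a)" for a using finite_GA[of l q] by (simp add: Out_def)
    have cP: "card P = (\<Sum>a\<in>GA l q. card (Out a))"
      unfolding P_def by (rule card_SigmaI) (auto simp: finite_GA finO)
    have disj: "P \<inter> converse P = {}" using no2 by (auto simp: P_def)
    define D where "D = (GA l q \<times> GA l q) - (\<lambda>x. (x,x)) ` GA l q"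
    have sub: "P \<union> converse P \<subseteq> D" by (auto simp: P_def D_def Out_def)
    have cD: "card D = m * m - m"
    proof -
      have "card ((\<lambda>x. (x,x)) ` GA l q) = m"
        by (subst card_image) (auto simp: inj_on_def card_GA m_def)
      then show ?thesis unfolding D_def
        by (subst card_Diff_subset) (auto simp: finite_GA card_cartesian_product card_GA m_def)
    qed
    have finD: "finite D" by (simp add: D_def finite_GA)
    have "card (P \<union> converse P) = card P + card (converse P)"
      by (rule card_Un_disjoint) (use finD sub finite_subset disj in auto)
    then have "2 * card P \<le> m * m - m" using card_mono[OF finD sub] cD by simp
    have "\<exists>a\<in>GA l q. 2 * card (Out a) < m"
    proof (rule ccontr)
      assume "\<not> ?thesis"
      then have "(\<Sum>a\<in>GA l q. m) \<le> (\<Sum>a\<in>GA l q. 2 * card (Out a))"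
        by (intro sum_mono) auto
      then have "m * m \<le> 2 * card P" by (simp add: cP card_GA m_def sum_distrib_left)
      with \<open>2 * card P \<le> m * m - m\<close> mpos show False
        by (metis diff_less le_trans less_le_not_le mult_pos_pos)
    qed
    then obtain a where a: "a \<in> GA l q" and aO: "2 * card (Out a) < m" by blast
    define W where "W i = {j. (i,j) \<in> Out a}" for i
    have Wsub: "W i \<subseteq> {..<q}" for i by (auto simp: W_def Out_def GA_def)
    have finW: "finite (W i)" for i using Wsub finite_subset by blast
    have RS: "R a \<subseteq> {..<c} \<times> PiE {..<l} W"
    proof
      fix b assume b: "b \<in> R a"
      obtain s f where sf: "b = (s,f)" by fastforce
      have "f \<in> PiE {..<l} W"
      proof -
        have fP: "f \<in> PiE {..<l} (\<lambda>_. {..<q})" using b sf by (auto simp: R_def GB_def)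
        have "f i \<in> W i" if "i < l" for i
          using b sf fP that a by (auto simp: R_def W_def Out_def GA_def PiE_iff)
        then show ?thesis using fP by (auto simp: PiE_iff)
      qed
      then show "b \<in> {..<c} \<times> PiE {..<l} W" using b sf by (auto simp: R_def GB_def)
    qed
    have finS: "finite ({..<c} \<times> PiE {..<l} W)" using finW by (simp add: finite_PiE)
    have "card (R a) \<le> card ({..<c} \<times> PiE {..<l} W)" using card_mono[OF finS RS] .
    also have "\<dots> = c * prod (\<lambda>i. card (W i)) {..<l}"
      by (simp add: card_cartesian_product card_PiE)
    finally have "card (R a) \<le> c * prod (\<lambda>i. card (W i)) {..<l}" .
    have OsubGA: "Out a \<subseteq> GA l q" by (auto simp: Out_def)
    have OS: "Out a = Sigma {..<l} W" using OsubGA by (auto simp: W_def GA_def)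
    have "card (Out a) = (\<Sum>i<l. card (W i))"
      unfolding OS by (rule card_SigmaI) (auto simp: finW)
    then have "2 * (\<Sum>i<l. card (W i)) \<le> l * q" using aO unfolding m_def by simp
    then have "real (2 * (\<Sum>i<l. card (W i))) \<le> real (l * q)" by (rule of_nat_mono)
    then have sumW: "(\<Sum>i<l. real (card (W i))) \<le> card {..<l} * real q / 2"
      by (simp add: of_nat_sum)
    have "(\<Prod>i<l. real (card (W i))) \<le> (real q / 2) ^ card {..<l}"
    proof (rule prod_half)
      show "finite {..<l}" by simp
      show "\<forall>i\<in>{..<l}. 0 \<le> real (card (W i))" by simp
      show "0 < real q" using q by simp
      show "(\<Sum>i<l. real (card (W i))) \<le> real (card {..<l}) * real q / 2" using sumW by simp
    qed
    then have P: "(\<Prod>i<l. real (card (W i))) \<le> (real q / 2) ^ l" by simp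
    have "real (card (R a)) \<le> real (c * prod (\<lambda>i. card (W i)) {..<l})"
      using \<open>card (R a) \<le> c * prod (\<lambda>i. card (W i)) {..<l}\<close> by (rule of_nat_mono)
    also have "\<dots> = real c * (\<Prod>i<l. real (card (W i)))" by simp
    also have "\<dots> \<le> real c * (real q / 2) ^ l" using P by (intro mult_left_mono) auto
    finally have "real (card (R a)) \<le> real c * (real q / 2) ^ l" .
    then have "real (c * q^(l-1)) \<le> real c * (real q / 2) ^ l" using Rlb[OF a] by linarith
    then have "real (c * q^(l-1)) * 2^l \<le> real c * real q ^ l"
      by (simp add: power_divide field_simps)
    then have "c * q^(l-1) * 2^l \<le> c * q ^ l" by (metis of_nat_le_iff of_nat_mult of_nat_numeral of_nat_power)
    moreover have "q ^ l = q * q^(l-1)" using q l by (metis Suc_pred' less_le_trans numeral_3_eq_3 pos2 power_Suc zero_less_Suc zero_less_power)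
    ultimately have "2^l \<le> q" using c q by (simp add: mult.assoc mult.left_commute)
    moreover have "q < 2^q" by simp
    moreover have "(2::nat)^q \<le> 2^l" using l q by (simp add: power_increasing power2_eq_square)
    ultimately show False by linarith
  qed
qed

lemma arrows_P4:
  assumes q: "q \<ge> 3" and l: "l = q^2" and c: "c \<ge> 1" and hc: "n - 1 \<le> c*((q-2)*q^(l-1))"
  shows "ind_arrows (Gr l q c) P4 (star n)"
  unfolding ind_arrows_def
proof (intro allI disjCI)
  fix col :: "((nat \<times> nat) + (nat \<times> (nat \<Rightarrow> nat))) set \<Rightarrow> bool"
  assume noblue: "\<not> mono_induced_copy (Gr l q c) col False (star n)"
  show "mono_induced_copy (Gr l q c) col True P4"
  proof (rule ccontr)
    assume nored: "\<not> mono_induced_copy (Gr l q c) col True P4"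
    define R where "R a = {b \<in> GB l q c. snd b (fst a) \<noteq> snd a \<and> col {Inl a, Inr b}}" for a
    have Rlb: "c*q^(l-1) \<le> card (R a)" if "a \<in> GA l q" for a
      unfolding R_def using red_lb[OF noblue that _ hc] q by simp
    have RsubB: "R a \<subseteq> GB l q c" for a by (auto simp: R_def)
    define T where "T b = {a \<in> GA l q. b \<in> R a}" for b
    have cR: "card (R a) = (\<Sum>b\<in>GB l q c. if b \<in> R a then 1 else 0)" for a
    proof -
      have "R a = {b \<in> GB l q c. b \<in> R a}" using RsubB[of a] by blast
      then have "card (R a) = (\<Sum>b\<in>{b \<in> GB l q c. b \<in> R a}. 1)" by simp
      also have "\<dots> = (\<Sum>b\<in>GB l q c. if b \<in> R a then 1 else 0)"
        by (rule sum.inter_filter[OF finite_GB])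
      finally show ?thesis .
    qed
    have cT: "card (T b) = (\<Sum>a\<in>GA l q. if b \<in> R a then 1 else 0)" for b
    proof -
      have "card (T b) = (\<Sum>a\<in>{a \<in> GA l q. b \<in> R a}. 1)" by (simp add: T_def)
      also have "\<dots> = (\<Sum>a\<in>GA l q. if b \<in> R a then 1 else 0)"
        by (rule sum.inter_filter[OF finite_GA])
      finally show ?thesis .
    qed
    have swap: "(\<Sum>a\<in>GA l q. card (R a)) = (\<Sum>b\<in>GB l q c. card (T b))"
      unfolding cR cT by (rule sum.swap)
    have l1: "l \<ge> 1" using q l by simp
    have qpow: "q ^ l = q * q^(l-1)" using l1 by (metis Suc_pred' less_le_trans power_Suc zero_less_one)
    have "(\<Sum>a\<in>GA l q. c*q^(l-1)) \<le> (\<Sum>a\<in>GA l q. card (R a))"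
      using Rlb by (intro sum_mono) auto
    then have low: "l * (c * q^l) \<le> (\<Sum>b\<in>GB l q c. card (T b))"
      using swap by (simp add: card_GA qpow mult.assoc mult.left_commute)
    have cGB: "card (GB l q c) = c * q^l" by (rule card_GB)
    have GBpos: "c * q^l > 0" using c q by simp
    have "\<exists>b\<in>GB l q c. l \<le> card (T b)"
    proof (rule ccontr)
      assume "\<not> ?thesis"
      then have "(\<Sum>b\<in>GB l q c. card (T b)) \<le> (\<Sum>b\<in>GB l q c. l - 1)"
        by (intro sum_mono) auto
      then have "(\<Sum>b\<in>GB l q c. card (T b)) \<le> (c * q^l) * (l - 1)" using cGB by simp
      moreover have "(c * q^l) * (l - 1) < l * (c * q^l)" using GBpos l1
        by (simp add: diff_mult_distrib2 mult.commute)
      ultimately show False using low by linarith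
    qed
    then obtain b where b: "b \<in> GB l q c" and Tb: "l \<le> card (T b)" by blast
    have "T b \<noteq> {}" using Tb l1 by auto
    then obtain a where aT: "a \<in> T b" by blast
    have a: "a \<in> GA l q" and ba: "b \<in> R a" using aT by (auto simp: T_def)
    define Tw where "Tw i = {j. (i,j) \<in> T b}" for i
    have Twsub: "Tw i \<subseteq> {..<q}" for i by (auto simp: Tw_def T_def GA_def)
    have finTw: "finite (Tw i)" for i using Twsub finite_subset by blast
    have RS: "R a \<subseteq> {..<c} \<times> PiE {..<l} (\<lambda>i. {..<q} - Tw i)"
    proof
      fix b' assume b': "b' \<in> R a"
      obtain s f where sf: "b' = (s,f)" by fastforce
      have fP: "f \<in> PiE {..<l} (\<lambda>_. {..<q})" and s: "s < c" using b' sf by (auto simp: R_def GB_def)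
      have "f i \<notin> Tw i" if i: "i < l" for i
      proof
        assume "f i \<in> Tw i"
        then have a'T: "(i, f i) \<in> T b" by (simp add: Tw_def)
        define a' where "a' = (i, f i)"
        have a': "a' \<in> GA l q" "b \<in> R a'" using a'T by (auto simp: T_def a'_def)
        have b'ns: "snd b' (fst a') = snd a'" by (simp add: sf a'_def)
        show False
        proof (cases "a' = a")
          case True
          then show False using b' b'ns by (simp add: R_def)
        next
          case False
          have bb': "b \<noteq> b'" using a'(2) b'ns by (auto simp: R_def)
          have adj_a'b: "snd b (fst a') \<noteq> snd a'" using a'(2) by (simp add: R_def)
          have b'GB: "b' \<in> GB l q c" using b' by (simp add: R_def)
          have "mono_induced_copy (Gr l q c) col True P4"
          proof (rule P4_copy[where xa="Inl a'" and xb="Inr b" and xc="Inl a" and xd = "Inr b'"])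
            show "Inl a' \<in> verts (Gr l q c)" "Inr b \<in> verts (Gr l q c)" "Inl a \<in> verts (Gr l q c)"
              "Inr b' \<in> verts (Gr l q c)" using a'(1) b a b'GB by (simp_all add: Gr_verts)
            show "distinct [Inl a', Inr b, Inl a, Inr b']" using False bb' by simp
            show "{Inl a', Inr b} \<in> edges (Gr l q c)" using a'(1) b adj_a'b by (simp add: Gr_AB)
            show "{Inr b, Inl a} \<in> edges (Gr l q c)" using a b ba by (simp add: Gr_BA R_def)
            show "{Inl a, Inr b'} \<in> edges (Gr l q c)" using a b' by (simp add: Gr_AB R_def)
            show "{Inl a', Inl a} \<notin> edges (Gr l q c)" by (rule Gr_AA)
            show "{Inl a', Inr b'} \<notin> edges (Gr l q c)" using b'ns by (simp add: Gr_AB)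
            show "{Inr b, Inr b'} \<notin> edges (Gr l q c)" by (rule Gr_BB)
            show "\<forall>x. {x} \<notin> edges (Gr l q c)" by (rule Gr_loop)
            show "\<forall>e\<in>edges (Gr l q c). \<exists>u v. e = {u, v}" by (rule Gr_ed)
            show "col {Inl a', Inr b}" using a'(2) by (simp add: R_def)
            show "col {Inr b, Inl a}" using ba by (simp add: R_def insert_commute)
            show "col {Inl a, Inr b'}" using b' by (simp add: R_def)
          qed
          with nored show False by blast
        qed
      qed
      then have "f \<in> PiE {..<l} (\<lambda>i. {..<q} - Tw i)"
      proof -
        assume h: "\<And>i. i < l \<Longrightarrow> f i \<notin> Tw i"
        show ?thesis
        proof (rule PiE_I)
          fix x assume x: "x \<in> {..<l}"
          then have "f x \<in> {..<q}" using PiE_mem[OF fP] by simp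
          then show "f x \<in> {..<q} - Tw x" using h x by simp
        next
          fix x assume "x \<notin> {..<l}" then show "f x = undefined" using PiE_arb[OF fP] by simp
        qed
      qed
      then show "b' \<in> {..<c} \<times> PiE {..<l} (\<lambda>i. {..<q} - Tw i)" using s sf by simp
    qed
    have finS: "finite ({..<c} \<times> PiE {..<l} (\<lambda>i. {..<q} - Tw i))" by (simp add: finite_PiE)
    have "card (R a) \<le> card ({..<c} \<times> PiE {..<l} (\<lambda>i. {..<q} - Tw i))" using card_mono[OF finS RS] .
    also have "\<dots> = c * prod (\<lambda>i. card ({..<q} - Tw i)) {..<l}"
      by (simp add: card_cartesian_product card_PiE)
    also have "prod (\<lambda>i. card ({..<q} - Tw i)) {..<l} = prod (\<lambda>i. q - card (Tw i)) {..<l}"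
      by (rule prod.cong) (auto simp: card_Diff_subset[OF finTw Twsub])
    finally have cRa: "card (R a) \<le> c * prod (\<lambda>i. q - card (Tw i)) {..<l}" .
    have TS: "T b = Sigma {..<l} Tw" using Twsub by (auto simp: Tw_def T_def GA_def)
    have "card (T b) = (\<Sum>i<l. card (Tw i))"
      unfolding TS by (rule card_SigmaI) (auto simp: finTw)
    then have sumT: "real l \<le> (\<Sum>i<l. real (card (Tw i)))" using Tb
      by (metis of_nat_le_iff of_nat_sum)
    have cTq: "card (Tw i) \<le> q" for i using card_mono[OF _ Twsub] by simp
    have "(\<Prod>i<l. real q - real (card (Tw i))) \<le> real q ^ card {..<l} * exp (- (\<Sum>i<l. real (card (Tw i))) / real q)"
    proof (rule prod_exp)
      show "finite {..<l}" by simp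
      show "\<forall>i\<in>{..<l}. 0 \<le> real (card (Tw i)) \<and> real (card (Tw i)) \<le> real q" using cTq by simp
      show "0 < real q" using q by simp
    qed
    also have "exp (- (\<Sum>i<l. real (card (Tw i))) / real q) \<le> exp (- real q)"
    proof -
      have "real q * real q \<le> (\<Sum>i<l. real (card (Tw i)))" using sumT l by (simp add: power2_eq_square)
      then have "real q \<le> (\<Sum>i<l. real (card (Tw i))) / real q" using q by (simp add: field_simps)
      then show ?thesis by simp
    qed
    finally have P: "(\<Prod>i<l. real q - real (card (Tw i))) \<le> real q ^ l * exp (- real q)"
      by (simp add: mult_left_mono)
    have "real (card (R a)) \<le> real (c * prod (\<lambda>i. q - card (Tw i)) {..<l})"
      using cRa by (rule of_nat_mono)
    also have "\<dots> = real c * (\<Prod>i<l. real q - real (card (Tw i)))"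
      using cTq by (simp add: of_nat_diff)
    also have "\<dots> \<le> real c * (real q ^ l * exp (- real q))" using P by (intro mult_left_mono) auto
    finally have "real (c * q^(l-1)) \<le> real c * (real q ^ l * exp (- real q))" using Rlb[OF a]
      by (meson of_nat_mono order_trans)
    moreover have rq: "real q ^ l = real q * real q ^ (l-1)" using qpow by (metis of_nat_mult of_nat_power)
    ultimately have "real c * real q^(l-1) * 1 \<le> real c * real q^(l-1) * (real q * exp (- real q))"
      by (simp add: rq mult_ac)
    then have "1 \<le> real q * exp (- real q)" using c q
      by (subst (asm) mult_le_cancel_left_pos) auto
    then have "exp (real q) \<le> real q" by (simp add: exp_minus field_simps)
    with exp_gt_self[of "real q"] show False by simp
  qed
qed

lemma final_bound:
  fixes n :: nat and x :: real
  assumes n2: "n \<ge> 2" and xdef: "x = ln (real n) powr (1/4)" and x1: "x \<ge> 1"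
    and asy: "(2*x+3)^3 + exp ((2*x+3)^2 * ln (2*x+3)) \<le> exp (x^4) / x"
    and H: "H \<in> {P4, twoK2}"
  shows "(\<exists>F :: nat graph. simple_graph F \<and> ind_arrows F H (star n)) \<and>
         real (IR H (star n)) \<le> real n + 2 * real n * (ln (real n)) powr (-1/4)"
proof -
  define L where "L = ln (real n)"
  have Lpos: "L > 0" using n2 by (simp add: L_def)
  have x4: "x^4 = L"
  proof -
    have "x^4 = x powr (real 4)" using x1 by (simp add: powr_realpow)
    also have "\<dots> = L" unfolding xdef L_def[symmetric] using Lpos by (simp add: powr_powr)
    finally show ?thesis .
  qed
  have expx: "exp (x^4) = real n" using x4 n2 by (simp add: L_def)
  have Lm: "L powr (-1/4) = 1 / x" using Lpos unfolding xdef L_def[symmetric]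
    by (simp add: powr_minus_divide)
  define q where "q = nat \<lceil>2*x\<rceil> + 2"
  have q_lo: "real q - 2 \<ge> 2*x" unfolding q_def using x1 by linarith
  have q_hi: "real q \<le> 2*x + 3" unfolding q_def using x1 by linarith
  have q3: "q \<ge> 3" using q_lo x1 by linarith
  define l where "l = q^2"
  define M where "M = (q-2)*q^(l-1)"
  have Mpos: "M > 0" using q3 by (simp add: M_def)
  define c where "c = (n-1) div M + 1"
  have c1: "c \<ge> 1" by (simp add: c_def)
  have hc: "n - 1 \<le> c * ((q-2)*q^(l-1))"
  proof -
    have e: "(n-1) div M * M + (n-1) mod M = n - 1" by (rule div_mult_mod_eq)
    moreover have "(n-1) mod M < M" using Mpos by simp
    ultimately have "n - 1 \<le> (n-1) div M * M + M" by linarith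
    also have "\<dots> = c * M" by (simp add: c_def distrib_right)
    finally show ?thesis by (simp add: M_def)
  qed
  have l1: "l \<ge> 1" using q3 by (simp add: l_def)
  have qpow: "q ^ l = q * q^(l-1)" using l1 by (metis Suc_pred' less_le_trans power_Suc zero_less_one)
  have arr: "ind_arrows (Gr l q c) H (star n)"
    using H arrows_P4[OF q3 l_def c1 hc] arrows_2K2[OF q3 l_def c1 hc] by auto
  from IR_le[OF Gr_simple arr]
  have ex: "\<exists>F :: nat graph. simple_graph F \<and> ind_arrows F H (star n)"
    and IRle: "IR H (star n) \<le> l * q + c * q ^ l" by (auto simp: Gr_card)
  have "real ((n-1) div M) * real M \<le> real (n-1)"
  proof -
    have "(n-1) div M * M \<le> n - 1" using div_mult_mod_eq[of "n-1" M] by linarith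
    then show ?thesis by (metis of_nat_le_iff of_nat_mult)
  qed
  then have cdiv: "real ((n-1) div M) \<le> real (n-1) / real M" using Mpos by (simp add: field_simps)
  have qM: "real q ^ l = real M * (real q / (real q - 2))"
  proof -
    have Mr: "real M = (real q - 2) * real q^(l-1)" using q3 by (simp add: M_def of_nat_diff)
    have rq: "real q ^ l = real q * real q^(l-1)" using qpow by (metis of_nat_mult of_nat_power)
    have nz: "real q - 2 \<noteq> 0" using q3 by simp
    have "real M * (real q / (real q - 2)) = real q * real q^(l-1)"
      unfolding Mr using nz by (simp add: field_simps)
    then show ?thesis using rq by simp
  qed
  have cq: "real (c * q^l) \<le> real (n-1) * (real q / (real q - 2)) + real q ^ l"
  proof -
    have "real (c * q^l) = (real ((n-1) div M) + 1) * real q ^ l" by (simp add: c_def algebra_simps)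
    also have "\<dots> \<le> (real (n-1) / real M + 1) * real q ^ l"
      using cdiv by (intro mult_right_mono) auto
    also have "\<dots> = real (n-1) / real M * real q ^ l + real q ^ l" by (simp add: distrib_right)
    also have "real (n-1) / real M * real q ^ l = real (n-1) * (real q / (real q - 2))"
      using Mpos unfolding qM by simp
    finally show ?thesis .
  qed
  have frac: "real q / (real q - 2) \<le> 1 + 1 / x"
  proof -
    have "real q / (real q - 2) = 1 + 2 / (real q - 2)" using q3 by (simp add: field_simps)
    also have "2 / (real q - 2) \<le> 2 / (2 * x)" using q_lo x1 by (intro divide_left_mono) auto
    finally show ?thesis using x1 by simp
  qed
  have part1: "real (n-1) * (real q / (real q - 2)) \<le> real n + real n / x"
  proof -
    have "real (n-1) * (real q / (real q - 2)) \<le> real n * (1 + 1/x)"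
      using frac q3 n2 by (intro mult_mono) auto
    then show ?thesis by (simp add: field_simps)
  qed
  define y where "y = 2*x+3"
  have yq: "real q \<le> y" using q_hi by (simp add: y_def)
  have y1: "y \<ge> 1" using x1 by (simp add: y_def)
  have part2: "real q ^ l \<le> exp (y^2 * ln y)"
  proof -
    have "real q ^ l = exp (real l * ln (real q))" using q3
      by (simp add: exp_of_nat_mult)
    also have "\<dots> \<le> exp (y^2 * ln y)"
    proof -
      have "real l \<le> y^2" using yq q3 by (simp add: l_def power_mono)
      moreover have "ln (real q) \<le> ln y" using yq q3 by simp
      moreover have "0 \<le> ln (real q)" using q3 by simp
      ultimately have "real l * ln (real q) \<le> y^2 * ln y"
        by (intro mult_mono) auto
      then show ?thesis by simp
    qed
    finally show ?thesis .
  qed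
  have part3: "real (l * q) \<le> y^3"
  proof -
    have "real (l * q) = real q ^ 3" by (simp add: l_def power2_eq_square power3_eq_cube)
    also have "\<dots> \<le> y^3" using yq by (intro power_mono) auto
    finally show ?thesis .
  qed
  have "real (IR H (star n)) \<le> real (l * q) + real (c * q^l)" using IRle by (metis of_nat_add of_nat_mono)
  also have "\<dots> \<le> y^3 + (real n + real n / x + exp (y^2 * ln y))"
    using part1 part2 part3 cq by linarith
  also have "\<dots> \<le> real n + real n / x + exp (x^4) / x" using asy unfolding y_def by linarith
  also have "\<dots> = real n + 2 * real n * (ln (real n)) powr (-1/4)"
    using Lm expx by (simp add: L_def)
  finally show ?thesis using ex by blast
qed

theorem lemma5:
  shows "\<exists>n0::nat. \<forall>n::nat. n > n0 \<longrightarrow>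
           (\<forall>H \<in> {P4, twoK2}.
              (\<exists>F :: nat graph. simple_graph F \<and> ind_arrows F H (star n)) \<and>
              real (IR H (star n)) \<le> real n + 2 * real n * (ln (real n)) powr (-1/4))"
proof -
  have A: "eventually (\<lambda>x::real. (2*x+3)^3 + exp ((2*x+3)^2 * ln (2*x+3)) \<le> exp (x^4) / x \<and> 1 \<le> x) at_top"
  proof (rule eventually_conj)
    show "eventually (\<lambda>x::real. (2*x+3)^3 + exp ((2*x+3)^2 * ln (2*x+3)) \<le> exp (x^4) / x) at_top"
      by real_asymp
    show "eventually (\<lambda>x::real. 1 \<le> x) at_top" by (rule eventually_ge_at_top)
  qed
  have lim0: "filterlim (\<lambda>x::real. ln x powr (1/4)) at_top at_top" by real_asymp
  have lim: "filterlim (\<lambda>n::nat. ln (real n) powr (1/4)) at_top sequentially"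
    using filterlim_compose[OF lim0 filterlim_real_sequentially] by (simp add: o_def)
  have E: "eventually (\<lambda>n::nat. (2*(ln (real n) powr (1/4))+3)^3 + exp ((2*(ln (real n) powr (1/4))+3)^2 * ln (2*(ln (real n) powr (1/4))+3))
      \<le> exp ((ln (real n) powr (1/4))^4) / (ln (real n) powr (1/4)) \<and> 1 \<le> ln (real n) powr (1/4)) sequentially"
    using lim A unfolding filterlim_iff by blast
  have E2: "eventually (\<lambda>n::nat. 2 \<le> n) sequentially" by (rule eventually_ge_at_top)
  obtain N where N: "\<And>n. n \<ge> N \<Longrightarrow> ((2*(ln (real n) powr (1/4))+3)^3 + exp ((2*(ln (real n) powr (1/4))+3)^2 * ln (2*(ln (real n) powr (1/4))+3))
      \<le> exp ((ln (real n) powr (1/4))^4) / (ln (real n) powr (1/4)) \<and> 1 \<le> ln (real n) powr (1/4)) \<and> 2 \<le> n"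
    using eventually_conj[OF E E2] unfolding eventually_sequentially by blast
  show ?thesis
  proof (intro exI[of _ N] allI impI ballI)
    fix n :: nat and H assume n: "N < n" and H: "H \<in> {P4, twoK2}"
    have Nn: "((2*(ln (real n) powr (1/4))+3)^3 + exp ((2*(ln (real n) powr (1/4))+3)^2 * ln (2*(ln (real n) powr (1/4))+3))
      \<le> exp ((ln (real n) powr (1/4))^4) / (ln (real n) powr (1/4)) \<and> 1 \<le> ln (real n) powr (1/4)) \<and> 2 \<le> n"
      using N n by simp
    show "(\<exists>F :: nat graph. simple_graph F \<and> ind_arrows F H (star n)) \<and>
              real (IR H (star n)) \<le> real n + 2 * real n * (ln (real n)) powr (-1/4)"
      by (rule final_bound[OF _ refl _ _ H]) (use Nn in auto)
  qed
qed

end
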